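(* Let $\operatorname{P}\in\operatorname{MM}(A,\theta,S)$, $E\subset\mathbb{Y}$, and let $\theta_i$ with $i\in S_j$ be varied to $\tilde\theta_i$. If $0\le |A_{y,S_j}|\le 1$ for all $y\in E$, then for any linear $\tilde\theta_i$-covariation scheme $\sigma$ the sensitivity function $\sigma(\operatorname{P})(E)$ is a linear (affine) function of $\tilde\theta_i$.
   Context: Let $\mathbb{Y}$ be a finite set with $q$ elements. A monomial model $\operatorname{MM}(A,\theta,S)$ is given by $A\in\mathcal{M}_{q\times k}(\mathbb{Z}_{\ge0})$ with rows $A_y$, parameters $\theta\in\mathbb{R}^k_{>0}$, and a partition $S=\{S_1,\dots,S_n\}$ of $[k]$ with each block $(\theta_l)_{l\in S_m}$ in the open probability simplex; $\operatorname{P}(y)=\prod_l\theta_l^{A_{y,l}}$, a probability distribution for every such parameter; $\operatorname{P}(E)=\sum_{y\in E}\operatorname{P}(y)$; $|A_{y,S_j}|=\sum_{l\in S_j}A_{y,l}$; $S_j^{-i}=S_j\setminus\{i\}$. A linear $\tilde\theta_i$-covariation scheme $\sigma$ sets $\theta_i$ to $\tilde\theta_i\in(0,1)$, sets $\tilde\theta_k=\gamma_k\tilde\theta_i+\delta_k$ for $k\in S_j^{-i}$ with constants chosen so the block $S_j$ sums to one, and leaves $\theta_l$, $l\notin S_j$, unchanged; $\sigma(\operatorname{P})(y)=\tilde\theta^{A_y}$ (proportional and uniform covariation are special cases). *)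

theory Defs
  imports Main Complex_Main
begin

definition is_partition :: "nat \<Rightarrow> nat set set \<Rightarrow> bool" where
  "is_partition k S \<longleftrightarrow> \<Union>S = {..<k} \<and> {} \<notin> S \<and>
     (\<forall>B\<in>S. \<forall>C\<in>S. B \<noteq> C \<longrightarrow> B \<inter> C = {})"

definition valid_params :: "nat \<Rightarrow> nat set set \<Rightarrow> (nat \<Rightarrow> real) \<Rightarrow> bool" where
  "valid_params k S \<theta> \<longleftrightarrow> (\<forall>l<k. \<theta> l > 0) \<and> (\<forall>B\<in>S. sum \<theta> B = 1)"

definition mono_prob :: "nat \<Rightarrow> ('y \<Rightarrow> nat \<Rightarrow> nat) \<Rightarrow> (nat \<Rightarrow> real) \<Rightarrow> 'y \<Rightarrow> real" where
  "mono_prob k A \<theta> y = (\<Prod>l<k. \<theta> l ^ A y l)"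

definition mono_event_prob :: "nat \<Rightarrow> ('y \<Rightarrow> nat \<Rightarrow> nat) \<Rightarrow> (nat \<Rightarrow> real) \<Rightarrow> 'y set \<Rightarrow> real" where
  "mono_event_prob k A \<theta> E = (\<Sum>y\<in>E. mono_prob k A \<theta> y)"

text \<open>P \<in> MM(A,theta,S) over the finite outcome set Y: partition, valid parameter,
  and P is a probability distribution on Y for every admissible parameter.\<close>
definition monomial_model :: "'y set \<Rightarrow> nat \<Rightarrow> ('y \<Rightarrow> nat \<Rightarrow> nat) \<Rightarrow> (nat \<Rightarrow> real) \<Rightarrow> nat set set \<Rightarrow> bool" where
  "monomial_model Y k A \<theta> S \<longleftrightarrow> finite Y \<and> Y \<noteq> {} \<and> is_partition k S \<and> valid_params k S \<theta> \<and>
     (\<forall>\<theta>'. valid_params k S \<theta>' \<longrightarrow> mono_event_prob k A \<theta>' Y = 1)"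

definition lin_cov :: "(nat \<Rightarrow> real) \<Rightarrow> nat set \<Rightarrow> nat \<Rightarrow> (nat \<Rightarrow> real) \<Rightarrow> (nat \<Rightarrow> real) \<Rightarrow> real \<Rightarrow> nat \<Rightarrow> real" where
  "lin_cov \<theta> Sj i \<gamma> \<delta> t l =
     (if l = i then t else if l \<in> Sj then \<gamma> l * t + \<delta> l else \<theta> l)"

definition lin_cov_scheme :: "(nat \<Rightarrow> real) \<Rightarrow> nat set \<Rightarrow> nat \<Rightarrow> (nat \<Rightarrow> real) \<Rightarrow> (nat \<Rightarrow> real) \<Rightarrow> bool" where
  "lin_cov_scheme \<theta> Sj i \<gamma> \<delta> \<longleftrightarrow> i \<in> Sj \<and>
     (\<forall>t\<in>{0<..<1}. sum (lin_cov \<theta> Sj i \<gamma> \<delta> t) Sj = 1)"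

end

theory Submission
  imports Defs
begin

lemma per_y:
  assumes fin: "finite Sj" and sub: "Sj \<subseteq> {..<k}" and iS: "i \<in> Sj"
    and le: "(\<Sum>l\<in>Sj. A y l) \<le> 1"
  shows "\<exists>a b :: real. \<forall>t. mono_prob k A (lin_cov \<theta> Sj i \<gamma> \<delta> t) y = a * t + b"
proof (cases "\<exists>l0\<in>Sj. A y l0 \<noteq> 0")
  case False
  have "mono_prob k A (lin_cov \<theta> Sj i \<gamma> \<delta> t) y = (\<Prod>l<k. (if l \<in> Sj then 1 else \<theta> l ^ A y l))" for t
    unfolding mono_prob_def
    by (rule prod.cong) (use False iS in \<open>auto simp: lin_cov_def\<close>)
  then show ?thesis by (metis mult_zero_left add_0)
next
  case True
  then obtain l0 where l0: "l0 \<in> Sj" "A y l0 \<noteq> 0" by blast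
  have z: "A y l = 0" if "l \<in> Sj" "l \<noteq> l0" for l
  proof -
    have "(\<Sum>l\<in>Sj. A y l) = A y l0 + (\<Sum>l\<in>Sj-{l0}. A y l)"
      using fin l0 by (simp add: sum.remove)
    moreover have "A y l \<le> (\<Sum>l\<in>Sj-{l0}. A y l)"
      using fin that by (intro member_le_sum) auto
    ultimately show ?thesis using le l0 by linarith
  qed
  have one: "A y l0 = 1"
  proof -
    have "A y l0 \<le> (\<Sum>l\<in>Sj. A y l)" using fin l0 by (intro member_le_sum) auto
    thus ?thesis using le l0 by linarith
  qed
  define C where "C = (\<Prod>l\<in>{..<k}-{l0}. (if l \<in> Sj then 1 else \<theta> l ^ A y l))"
  have eq: "mono_prob k A (lin_cov \<theta> Sj i \<gamma> \<delta> t) y = lin_cov \<theta> Sj i \<gamma> \<delta> t l0 * C" for t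
  proof -
    have "mono_prob k A (lin_cov \<theta> Sj i \<gamma> \<delta> t) y
        = lin_cov \<theta> Sj i \<gamma> \<delta> t l0 ^ A y l0 * (\<Prod>l\<in>{..<k}-{l0}. lin_cov \<theta> Sj i \<gamma> \<delta> t l ^ A y l)"
      unfolding mono_prob_def using l0 sub by (subst prod.remove[of _ l0]) auto
    also have "(\<Prod>l\<in>{..<k}-{l0}. lin_cov \<theta> Sj i \<gamma> \<delta> t l ^ A y l) = C"
      unfolding C_def by (rule prod.cong) (use z iS in \<open>auto simp: lin_cov_def\<close>)
    finally show ?thesis using one by simp
  qed
  show ?thesis
  proof (cases "l0 = i")
    case True
    then show ?thesis using eq by (intro exI[of _ C] exI[of _ 0]) (auto simp: lin_cov_def)
  next
    case False
    then show ?thesis using eq l0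
      by (intro exI[of _ "\<gamma> l0 * C"] exI[of _ "\<delta> l0 * C"]) (auto simp: lin_cov_def algebra_simps)
  qed
qed

theorem corollary2:
  fixes Y E :: "'y set" and k :: nat and A :: "'y \<Rightarrow> nat \<Rightarrow> nat"
    and \<theta> \<gamma> \<delta> :: "nat \<Rightarrow> real" and S :: "nat set set" and Sj :: "nat set" and i :: nat
  assumes "monomial_model Y k A \<theta> S"
    and "E \<subseteq> Y"
    and "Sj \<in> S" and "i \<in> Sj"
    and "\<forall>y\<in>E. (\<Sum>l\<in>Sj. A y l) \<le> 1"
    and "lin_cov_scheme \<theta> Sj i \<gamma> \<delta>"
  shows "\<exists>a b :: real. \<forall>t\<in>{0<..<1}.
           mono_event_prob k A (lin_cov \<theta> Sj i \<gamma> \<delta> t) E = a * t + b"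
proof -
  have finY: "finite Y" and part: "is_partition k S" using assms(1) unfolding monomial_model_def by auto
  have finE: "finite E" using finY assms(2) finite_subset by blast
  have sub: "Sj \<subseteq> {..<k}" using part assms(3) unfolding is_partition_def by blast
  have fin: "finite Sj" using sub finite_subset by blast
  have "\<forall>y\<in>E. \<exists>a b :: real. \<forall>t. mono_prob k A (lin_cov \<theta> Sj i \<gamma> \<delta> t) y = a * t + b"
    using per_y[OF fin sub assms(4), of A _ \<theta> \<gamma> \<delta>] assms(5) by blast
  then obtain a b where ab: "\<And>y t. y \<in> E \<Longrightarrow> mono_prob k A (lin_cov \<theta> Sj i \<gamma> \<delta> t) y = a y * t + b y"
    by metis
  have "mono_event_prob k A (lin_cov \<theta> Sj i \<gamma> \<delta> t) E = (\<Sum>y\<in>E. a y) * t + (\<Sum>y\<in>E. b y)" for t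
    unfolding mono_event_prob_def
    by (simp add: ab sum.distrib sum_distrib_right)
  then show ?thesis by blast
qed

end
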